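(* Suppose a graph $G$ has nonadjacent simplicial vertices $u$ and $v$ with $N(u)\cap N(v)\neq\emptyset$, and there exist distinct vertices $x\in N(u)$ and $y\in N(v)$ that are nonadjacent. Then $G$ is not well-bicovered.
   Context: All graphs are finite and simple; "subgraph" means induced subgraph. $N(w)$ is the open neighborhood of $w$. A vertex is simplicial if its neighborhood induces a complete graph. A graph is well-bicovered if every vertex-inclusion-maximal induced bipartite subgraph has the same order. *)

theory Defs
  imports Main
begin

definition simple_graph :: "'a set \<Rightarrow> ('a \<Rightarrow> 'a \<Rightarrow> bool) \<Rightarrow> bool" where
  "simple_graph V E \<longleftrightarrow> finite V \<and> (\<forall>x y. E x y \<longrightarrow> x \<in> V \<and> y \<in> V)
     \<and> (\<forall>x y. E x y \<longrightarrow> E y x) \<and> (\<forall>x. \<not> E x x)"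

definition nbhd :: "'a set \<Rightarrow> ('a \<Rightarrow> 'a \<Rightarrow> bool) \<Rightarrow> 'a \<Rightarrow> 'a set" where
  "nbhd V E w = {z \<in> V. E w z}"

definition simplicial :: "'a set \<Rightarrow> ('a \<Rightarrow> 'a \<Rightarrow> bool) \<Rightarrow> 'a \<Rightarrow> bool" where
  "simplicial V E w \<longleftrightarrow> (\<forall>a \<in> nbhd V E w. \<forall>b \<in> nbhd V E w. a \<noteq> b \<longrightarrow> E a b)"

definition independent :: "('a \<Rightarrow> 'a \<Rightarrow> bool) \<Rightarrow> 'a set \<Rightarrow> bool" where
  "independent E A \<longleftrightarrow> (\<forall>a \<in> A. \<forall>b \<in> A. \<not> E a b)"

definition induces_bipartite :: "'a set \<Rightarrow> ('a \<Rightarrow> 'a \<Rightarrow> bool) \<Rightarrow> 'a set \<Rightarrow> bool" where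
  "induces_bipartite V E S \<longleftrightarrow> S \<subseteq> V \<and>
     (\<exists>A B. A \<union> B = S \<and> A \<inter> B = {} \<and> independent E A \<and> independent E B)"

definition maximal_induced_bipartite :: "'a set \<Rightarrow> ('a \<Rightarrow> 'a \<Rightarrow> bool) \<Rightarrow> 'a set \<Rightarrow> bool" where
  "maximal_induced_bipartite V E S \<longleftrightarrow> induces_bipartite V E S \<and>
     (\<forall>T. induces_bipartite V E T \<and> S \<subseteq> T \<longrightarrow> T = S)"

definition well_bicovered :: "'a set \<Rightarrow> ('a \<Rightarrow> 'a \<Rightarrow> bool) \<Rightarrow> bool" where
  "well_bicovered V E \<longleftrightarrow> (\<forall>S T. maximal_induced_bipartite V E S \<and> maximal_induced_bipartite V E T
       \<longrightarrow> card S = card T)"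

end

theory Submission
  imports Defs
begin

lemma extend_max:
  assumes "finite V" "induces_bipartite V E S"
  shows "\<exists>T. S \<subseteq> T \<and> maximal_induced_bipartite V E T"
proof -
  let ?F = "{T. induces_bipartite V E T \<and> S \<subseteq> T}"
  have "?F \<subseteq> Pow V" by (auto simp: induces_bipartite_def)
  hence fin: "finite ?F" using assms(1) by (meson finite_Pow_iff finite_subset)
  have ne: "?F \<noteq> {}" using assms(2) by blast
  obtain m where m: "m \<in> ?F" "\<And>b. b \<in> ?F \<Longrightarrow> m \<subseteq> b \<Longrightarrow> m = b"
    using finite_has_maximal[OF fin ne] by metis
  have "maximal_induced_bipartite V E m"
    unfolding maximal_induced_bipartite_def
  proof (intro conjI allI impI)
    show "induces_bipartite V E m" using m(1) by simp
    fix T assume "induces_bipartite V E T \<and> m \<subseteq> T"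
    then show "T = m" using m by force
  qed
  thus ?thesis using m(1) by blast
qed

lemma triangle:
  assumes "induces_bipartite V E S" "a \<in> S" "b \<in> S" "c \<in> S" "E a b" "E b c" "E a c"
  shows False
proof -
  from assms(1) obtain A B where AB: "A \<union> B = S" "independent E A" "independent E B"
    unfolding induces_bipartite_def by blast
  have iA: "\<And>p q. p \<in> A \<Longrightarrow> q \<in> A \<Longrightarrow> \<not> E p q" using AB(2) unfolding independent_def by blast
  have iB: "\<And>p q. p \<in> B \<Longrightarrow> q \<in> B \<Longrightarrow> \<not> E p q" using AB(3) unfolding independent_def by blast
  have "a \<in> A \<or> a \<in> B" "b \<in> A \<or> b \<in> B" "c \<in> A \<or> c \<in> B" using AB(1) assms(2-4) by auto
  thus False using iA iB assms(5-7) by metis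
qed
lemma swap_lemma:
  assumes "A \<union> B = S1" "A \<inter> B = {}" "independent E A" "independent E B" "S1 \<subseteq> V"
    "u \<in> V" "v \<in> V" "\<not> E u v" "u \<notin> S1" "v \<notin> S1"
    "\<And>z. z \<in> S1 \<Longrightarrow> E u z \<Longrightarrow> z = x \<or> z = w"
    "\<And>z. z \<in> S1 \<Longrightarrow> E v z \<Longrightarrow> z = y \<or> z = w"
    "\<And>a b. E a b \<Longrightarrow> E b a" "\<And>a. \<not> E a a"
    "x \<in> A" "y \<in> A" "w \<in> B"
  shows "induces_bipartite V E ((S1 - {w}) \<union> {u, v})"
proof -
  have "(S1 - {w}) \<union> {u, v} \<subseteq> V" using assms by auto
  moreover have "A \<union> ((B - {w}) \<union> {u, v}) = (S1 - {w}) \<union> {u, v}" using assms(1,2,17) by auto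
  moreover have "A \<inter> ((B - {w}) \<union> {u, v}) = {}" using assms(1,2,9,10) by auto
  moreover have "independent E A" by fact
  moreover have "independent E ((B - {w}) \<union> {u, v})"
    unfolding independent_def
  proof (intro ballI)
    fix a b assume a: "a \<in> (B - {w}) \<union> {u, v}" and b: "b \<in> (B - {w}) \<union> {u, v}"
    have nB: "x \<notin> B" "y \<notin> B" using assms(2,15,16) by auto
    have iB: "\<And>a b. a \<in> B \<Longrightarrow> b \<in> B \<Longrightarrow> \<not> E a b" using assms(4) unfolding independent_def by blast
    show "\<not> E a b"
    proof -
      { assume "a \<in> B - {w}" "b \<in> B - {w}" hence ?thesis using iB by blast }
      moreover { fix p q assume "p \<in> {u,v}" "q \<in> B - {w}"
        hence "\<not> E p q" using assms(1,11,12) nB by blast }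
      moreover have "\<And>p q. p \<in> {u,v} \<Longrightarrow> q \<in> {u,v} \<Longrightarrow> \<not> E p q"
        using assms(8,13,14) by blast
      ultimately show ?thesis using a b assms(13) by blast
    qed
  qed
  ultimately show ?thesis unfolding induces_bipartite_def
    apply -
    apply (rule conjI)
     apply assumption
    apply (rule exI[of _ A])
    apply (rule exI[of _ "(B - {w}) \<union> {u,v}"])
    apply (intro conjI)
    by assumption+
qed

theorem mainTheorem16:
  fixes V :: "'a set" and E :: "'a \<Rightarrow> 'a \<Rightarrow> bool" and u v x y :: 'a
  assumes "simple_graph V E"
    and "u \<in> V" and "v \<in> V" and "u \<noteq> v" and "\<not> E u v"
    and "simplicial V E u" and "simplicial V E v"
    and "nbhd V E u \<inter> nbhd V E v \<noteq> {}"
    and "x \<in> nbhd V E u" and "y \<in> nbhd V E v" and "x \<noteq> y" and "\<not> E x y"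
  shows "\<not> well_bicovered V E"
proof
  assume wb: "well_bicovered V E"
  have fin: "finite V" and inV: "\<And>a b. E a b \<Longrightarrow> a \<in> V \<and> b \<in> V"
    and sym: "\<And>a b. E a b \<Longrightarrow> E b a" and irr: "\<And>a. \<not> E a a"
    using assms(1) unfolding simple_graph_def by auto
  obtain w where w: "w \<in> nbhd V E u" "w \<in> nbhd V E v" using assms(8) by blast
  have su: "\<And>a b. a \<in> nbhd V E u \<Longrightarrow> b \<in> nbhd V E u \<Longrightarrow> a \<noteq> b \<Longrightarrow> E a b"
    using assms(6) unfolding simplicial_def by blast
  have sv: "\<And>a b. a \<in> nbhd V E v \<Longrightarrow> b \<in> nbhd V E v \<Longrightarrow> a \<noteq> b \<Longrightarrow> E a b"
    using assms(7) unfolding simplicial_def by blast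
  have xw: "x \<noteq> w"
  proof
    assume "x = w"
    then show False using sv[OF w(2) assms(10)] assms(11,12) by auto
  qed
  have yw: "y \<noteq> w"
  proof
    assume "y = w"
    then show False using su[OF assms(9) w(1)] assms(11,12) by auto
  qed
  have Exw: "E x w" using su[OF assms(9) w(1) xw] .
  have Eyw: "E y w" using sv[OF assms(10) w(2) yw] .
  have Eux: "E u x" "E u w" "E v y" "E v w" using assms(9,10) w unfolding nbhd_def by auto
  have xV: "x \<in> V" "y \<in> V" "w \<in> V" using assms(9,10) w unfolding nbhd_def by auto
  have "induces_bipartite V E {x, w, y}"
  proof -
    have "{x,y} \<union> {w} = {x,w,y}" "{x,y} \<inter> {w} = {}" "independent E {x,y}" "independent E {w}"
      using xw yw assms(12) irr sym by (auto simp: independent_def)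
    thus ?thesis unfolding induces_bipartite_def using xV by blast
  qed
  then obtain S1 where S1: "{x,w,y} \<subseteq> S1" "maximal_induced_bipartite V E S1"
    using extend_max[OF fin] by blast
  have bS1: "induces_bipartite V E S1" using S1(2) unfolding maximal_induced_bipartite_def by blast
  from bS1 obtain A B where AB: "A \<union> B = S1" "A \<inter> B = {}" "independent E A" "independent E B"
    and S1V: "S1 \<subseteq> V"
    unfolding induces_bipartite_def by blast
  have uS1: "u \<notin> S1" using triangle[OF bS1 _ _ _ Exw sym[OF Eux(2)] sym[OF Eux(1)]] S1(1) by auto
  have vS1: "v \<notin> S1" using triangle[OF bS1 _ _ _ Eyw sym[OF Eux(4)] sym[OF Eux(3)]] S1(1) by auto
  have nu: "\<And>z. z \<in> S1 \<Longrightarrow> E u z \<Longrightarrow> z = x \<or> z = w"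
  proof (rule ccontr)
    fix z assume z: "z \<in> S1" "E u z" "\<not> (z = x \<or> z = w)"
    have zn: "z \<in> nbhd V E u" using z inV unfolding nbhd_def by auto
    show False using triangle[OF bS1 _ _ z(1) Exw su[OF w(1) zn] su[OF assms(9) zn]] S1(1) z(3) by auto
  qed
  have nv: "\<And>z. z \<in> S1 \<Longrightarrow> E v z \<Longrightarrow> z = y \<or> z = w"
  proof (rule ccontr)
    fix z assume z: "z \<in> S1" "E v z" "\<not> (z = y \<or> z = w)"
    have zn: "z \<in> nbhd V E v" using z inV unfolding nbhd_def by auto
    show False using triangle[OF bS1 _ _ z(1) Eyw sv[OF w(2) zn] sv[OF assms(10) zn]] S1(1) z(3) by auto
  qed
  have sides: "(x \<in> A \<and> y \<in> A \<and> w \<in> B) \<or> (x \<in> B \<and> y \<in> B \<and> w \<in> A)"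
    using AB S1(1) Exw Eyw unfolding independent_def by blast
  define S2 where "S2 = (S1 - {w}) \<union> {u, v}"
  have bS2: "induces_bipartite V E S2"
    using sides
  proof
    assume h: "x \<in> A \<and> y \<in> A \<and> w \<in> B"
    show ?thesis unfolding S2_def
      by (rule swap_lemma[OF AB S1V assms(2,3,5) uS1 vS1 nu nv sym irr]) (use h in auto)
  next
    assume h: "x \<in> B \<and> y \<in> B \<and> w \<in> A"
    have AB': "B \<union> A = S1" "B \<inter> A = {}" using AB by auto
    show ?thesis unfolding S2_def
      by (rule swap_lemma[OF AB' AB(4,3) S1V assms(2,3,5) uS1 vS1 nu nv sym irr]) (use h in auto)
  qed
  then obtain S3 where S3: "S2 \<subseteq> S3" "maximal_induced_bipartite V E S3"
    using extend_max[OF fin] by blast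
  have "S3 \<subseteq> V" using S3(2) unfolding maximal_induced_bipartite_def induces_bipartite_def by blast
  hence f3: "finite S3" using fin finite_subset by blast
  have fS1: "finite S1" using S1V fin finite_subset by blast
  have "card S2 = card S1 + 1"
  proof -
    have "card (S1 - {w}) = card S1 - 1" using S1(1) fS1 by simp
    moreover have "card S2 = card (S1 - {w}) + 2" unfolding S2_def
      using uS1 vS1 assms(4) fS1 by (simp add: card_insert_if)
    moreover have "card S1 \<ge> 1" using S1(1) fS1 card_0_eq by fastforce
    ultimately show ?thesis by simp
  qed
  moreover have "card S2 \<le> card S3" using card_mono[OF f3 S3(1)] .
  moreover have "card S1 = card S3" using wb S1(2) S3(2) unfolding well_bicovered_def by blast
  ultimately show False by simp
qed

end
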